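(* Let $\kappa<\Gamma$ be infinite cardinals and let $f\mapsto\hat f$ be a surjective linear isometry from $X^{\kappa,\Gamma}$ onto $C(K^{\kappa,\Gamma})$ preserving pointwise multiplication and order, $K^{\kappa,\Gamma}$ compact. Then there is a point $p\in K^{\kappa,\Gamma}$ such that $\{\hat f: f\in X_0^{\kappa,\Gamma}\}=C(K^{\kappa,\Gamma},p)$; consequently $X_0^{\kappa,\Gamma}$ is isometric to $C(K^{\kappa,\Gamma},p)$. Moreover, $p$ is a $P$-point of $K^{\kappa,\Gamma}$.
   Context: $X^{\kappa,\Gamma}=\{f\in\ell_\infty(\Gamma):\exists A\subseteq\Gamma,\ |A|=\kappa,\ f|_{\Gamma\setminus A}\text{ is constant}\}$ and $X_0^{\kappa,\Gamma}=\{f\in\ell_\infty(\Gamma):\exists A\subseteq\Gamma,\ |A|=\kappa,\ f|_{\Gamma\setminus A}\equiv 0\}$, both with the sup norm. For compact $K$ and $p\in K$, $C(K,p)=\{f\in C(K):f(p)=0\}$. A point $p\in K$ is a $P$-point if every $g\in C(K)$ is constant on some open neighbourhood of $p$. *)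

theory Defs
  imports "HOL-Analysis.Analysis"
begin

definition supnorm :: "('a \<Rightarrow> real) \<Rightarrow> real" where
  "supnorm f = (SUP x. \<bar>f x\<bar>)"

text \<open>\<open>X^{\<kappa>,\<Gamma>}\<close>: \<open>\<Gamma>\<close> is the universe of type 'g, \<open>\<kappa>\<close> the cardinality of type 'k.\<close>
definition Xspace :: "'k itself \<Rightarrow> ('g \<Rightarrow> real) set" where
  "Xspace _ = {f. bounded (range f) \<and>
     (\<exists>A::'g set. (card_of A, card_of (UNIV::'k set)) \<in> ordIso \<and>
        (\<exists>c. \<forall>x. x \<notin> A \<longrightarrow> f x = c))}"

definition X0space :: "'k itself \<Rightarrow> ('g \<Rightarrow> real) set" where
  "X0space _ = {f. bounded (range f) \<and>
     (\<exists>A::'g set. (card_of A, card_of (UNIV::'k set)) \<in> ordIso \<and>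
        (\<forall>x. x \<notin> A \<longrightarrow> f x = 0))}"

definition CK :: "('c::topological_space \<Rightarrow> real) set" where
  "CK = {g. continuous_on UNIV g}"

definition CKp :: "'c::topological_space \<Rightarrow> ('c \<Rightarrow> real) set" where
  "CKp p = {g. continuous_on UNIV g \<and> g p = 0}"

definition P_point :: "'c::topological_space \<Rightarrow> bool" where
  "P_point p \<longleftrightarrow> (\<forall>g::'c \<Rightarrow> real. continuous_on UNIV g \<longrightarrow>
      (\<exists>U. open U \<and> p \<in> U \<and> (\<forall>x\<in>U. g x = g p)))"

end

theory Submission
  imports Defs
begin

definition KS :: "'k itself \<Rightarrow> 'g set set" where
  "KS _ = {A::'g set. (card_of A, card_of (UNIV::'k set)) \<in> ordIso}"

lemma KS_iff: "A \<in> KS TYPE('k) \<longleftrightarrow> (card_of A, card_of (UNIV::'k set)) \<in> ordIso"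
  by (simp add: KS_def)

lemma KS_Un:
  assumes kinf: "infinite (UNIV :: 'k set)" and A: "A \<in> KS TYPE('k)" and B: "B \<in> KS TYPE('k)"
  shows "A \<union> B \<in> KS TYPE('k)"
proof -
  have a: "(card_of A, card_of (UNIV::'k set)) \<in> ordIso" and b: "(card_of B, card_of (UNIV::'k set)) \<in> ordIso"
    using A B by (auto simp: KS_def)
  have le: "(card_of (A \<union> B), card_of (UNIV::'k set)) \<in> ordLeq"
    apply (rule card_of_Un_ordLeq_infinite_Field)
    using kinf a b ordIso_iff_ordLeq by (auto simp: Field_card_of card_of_Card_order card_of_card_order_on)
  have ge: "(card_of (UNIV::'k set), card_of (A \<union> B)) \<in> ordLeq"
    by (rule ordIso_ordLeq_trans[OF ordIso_symmetric[OF a] card_of_mono1[OF Un_upper1]])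
  have "(card_of (A \<union> B), card_of (UNIV::'k set)) \<in> ordIso" using le ge ordIso_iff_ordLeq by blast
  then show ?thesis by (simp add: KS_def)
qed

lemma KS_ne:
  assumes kless: "(card_of (UNIV :: 'k set), card_of (UNIV :: 'g set)) \<in> ordLess"
    and A: "A \<in> KS TYPE('k)"
  shows "A \<noteq> (UNIV::'g set)"
proof
  assume "A = UNIV"
  with A have "(card_of (UNIV::'g set), card_of (UNIV::'k set)) \<in> ordIso" by (auto simp: KS_def)
  then have "(card_of (UNIV::'k set), card_of (UNIV::'g set)) \<in> ordIso" by (rule ordIso_symmetric)
  with kless show False using not_ordLess_ordIso by blast
qed

lemma KS_ex:
  assumes kless: "(card_of (UNIV :: 'k set), card_of (UNIV :: 'g set)) \<in> ordLess"
  shows "\<exists>A::'g set. A \<in> KS TYPE('k)"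
proof -
  have "(card_of (UNIV :: 'k set), card_of (UNIV :: 'g set)) \<in> ordLeq"
    using kless ordLess_imp_ordLeq by blast
  then have "\<exists>j. inj_on j (UNIV::'k set) \<and> j ` UNIV \<subseteq> (UNIV::'g set)"
    by (rule iffD2[OF card_of_ordLeq])
  then obtain j :: "'k \<Rightarrow> 'g" where j: "inj_on j UNIV" by blast
  then have "bij_betw j UNIV (range j)" by (simp add: bij_betw_def)
  then have "(card_of (UNIV::'k set), card_of (range j)) \<in> ordIso" by (rule iffD1[OF card_of_ordIso, OF exI])
  then have "(card_of (range j), card_of (UNIV::'k set)) \<in> ordIso" by (rule ordIso_symmetric)
  then show ?thesis unfolding KS_def by blast
qed

lemma bounded_range_real: "bounded (range (f::'a \<Rightarrow> real)) \<longleftrightarrow> (\<exists>M. \<forall>x. \<bar>f x\<bar> \<le> M)"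
  by (auto simp: bounded_iff)

lemma idem_real: "(x::real) = x * x \<Longrightarrow> x = 0 \<or> x = 1"
proof -
  assume "x = x * x"
  then have "x * (x - 1) = 0" by (simp add: algebra_simps)
  then show ?thesis by simp
qed

theorem mainTheorem10:
  fixes T :: "('g \<Rightarrow> real) \<Rightarrow> ('c::t2_space \<Rightarrow> real)"
  assumes kinf: "infinite (UNIV :: 'k set)"
    and ginf: "infinite (UNIV :: 'g set)"
    and kless: "(card_of (UNIV :: 'k set), card_of (UNIV :: 'g set)) \<in> ordLess"
    and Kcomp: "compact (UNIV :: 'c set)"
    and onto: "T ` Xspace TYPE('k) = CK"
    and lin: "\<And>f g a b. f \<in> Xspace TYPE('k) \<Longrightarrow> g \<in> Xspace TYPE('k) \<Longrightarrow>
                T (\<lambda>x. a * f x + b * g x) = (\<lambda>t. a * T f t + b * T g t)"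
    and isom: "\<And>f g. f \<in> Xspace TYPE('k) \<Longrightarrow> g \<in> Xspace TYPE('k) \<Longrightarrow>
                supnorm (\<lambda>t. T f t - T g t) = supnorm (\<lambda>x. f x - g x)"
    and mult: "\<And>f g. f \<in> Xspace TYPE('k) \<Longrightarrow> g \<in> Xspace TYPE('k) \<Longrightarrow>
                T (\<lambda>x. f x * g x) = (\<lambda>t. T f t * T g t)"
    and order: "\<And>f g. f \<in> Xspace TYPE('k) \<Longrightarrow> g \<in> Xspace TYPE('k) \<Longrightarrow>
                (\<forall>x. f x \<le> g x) \<Longrightarrow> (\<forall>t. T f t \<le> T g t)"
  shows "\<exists>p::'c. T ` X0space TYPE('k) = CKp p
           \<and> (\<exists>S :: ('g \<Rightarrow> real) \<Rightarrow> ('c \<Rightarrow> real). S ` X0space TYPE('k) = CKp p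
                  \<and> inj_on S (X0space TYPE('k))
                  \<and> (\<forall>f\<in>X0space TYPE('k). \<forall>g\<in>X0space TYPE('k). \<forall>a b.
                        S (\<lambda>x. a * f x + b * g x) = (\<lambda>t. a * S f t + b * S g t))
                  \<and> (\<forall>f\<in>X0space TYPE('k). \<forall>g\<in>X0space TYPE('k).
                        supnorm (\<lambda>t. S f t - S g t) = supnorm (\<lambda>x. f x - g x)))
           \<and> P_point p"
proof -
  let ?X = "Xspace TYPE('k) :: ('g \<Rightarrow> real) set"
  let ?Yz = "X0space TYPE('k) :: ('g \<Rightarrow> real) set"
  let ?KS = "KS TYPE('k) :: 'g set set"
  define e :: "'g set \<Rightarrow> 'g \<Rightarrow> real" where "e A = (\<lambda>x. if x \<in> A then 1 else 0)" for A
  have XI: "f \<in> ?X" if "bounded (range f)" "A \<in> ?KS" "\<forall>x. x\<notin>A \<longrightarrow> f x = c" for f A c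
    using that unfolding Xspace_def KS_def by blast
  have X0I: "f \<in> ?Yz" if "bounded (range f)" "A \<in> ?KS" "\<forall>x. x\<notin>A \<longrightarrow> f x = 0" for f A
    using that unfolding X0space_def KS_def by blast
  have X0X: "?Yz \<subseteq> ?X" unfolding Xspace_def X0space_def by blast
  have XE: "\<exists>A c. A \<in> ?KS \<and> bounded (range f) \<and> (\<forall>x. x\<notin>A \<longrightarrow> f x = c)" if "f \<in> ?X" for f
    using that unfolding Xspace_def KS_def by blast
  have X0E: "\<exists>A. A \<in> ?KS \<and> bounded (range f) \<and> (\<forall>x. x\<notin>A \<longrightarrow> f x = 0)" if "f \<in> ?Yz" for f
    using that unfolding X0space_def KS_def by blast
  obtain A0 where A0: "A0 \<in> ?KS" using KS_ex[OF kless] by blast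
  have one: "(\<lambda>x. 1::real) \<in> ?X"
    by (rule XI[of _ A0 1]) (auto simp: bounded_range_real A0)
  have eX: "e A \<in> ?X" if "A \<in> ?KS" for A
  proof -
    have "bounded (range (e A))" unfolding bounded_range_real e_def by (intro exI[of _ 1]) auto
    then show ?thesis using that by (intro XI[of _ A 0]) (auto simp: e_def)
  qed
  have cont: "continuous_on UNIV (T f)" if "f \<in> ?X" for f
    using onto that unfolding CK_def by blast
  have inj: "inj_on T ?X"
  proof (rule inj_onI)
    fix f g assume f: "f \<in> ?X" and g: "g \<in> ?X" and eq: "T f = T g"
    have s0: "supnorm (\<lambda>x. f x - g x) = 0" using isom[OF f g] eq by (simp add: supnorm_def)
    obtain M1 where M1: "\<forall>x. \<bar>f x\<bar> \<le> M1" using XE[OF f] bounded_range_real by blast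
    obtain M2 where M2: "\<forall>x. \<bar>g x\<bar> \<le> M2" using XE[OF g] bounded_range_real by blast
    have bdd: "bdd_above (range (\<lambda>x. \<bar>f x - g x\<bar>))"
    proof (rule bdd_aboveI[of _ "M1 + M2"])
      fix y assume "y \<in> range (\<lambda>x. \<bar>f x - g x\<bar>)"
      then obtain x where "y = \<bar>f x - g x\<bar>" by blast
      then show "y \<le> M1 + M2" using M1[rule_format, of x] M2[rule_format, of x] by linarith
    qed
    have "\<bar>f x - g x\<bar> \<le> 0" for x
      using cSUP_upper[OF UNIV_I bdd, of x] s0 by (simp add: supnorm_def)
    then show "f = g" by (auto simp: fun_eq_iff)
  qed
  have T1: "T (\<lambda>x. 1) = (\<lambda>t. 1)"
  proof -
    have "(\<lambda>t. 1::real) \<in> CK" by (simp add: CK_def)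
    then obtain v where v: "v \<in> ?X" "T v = (\<lambda>t. 1)" using onto by (metis imageE)
    have "T (\<lambda>x. v x * 1) = (\<lambda>t. T v t * T (\<lambda>x. 1) t)" using mult[OF v(1) one] .
    then show ?thesis using v by simp
  qed
  have idem: "T (e A) t = 0 \<or> T (e A) t = 1" if "A \<in> ?KS" for A t
  proof -
    have "(\<lambda>x. e A x * e A x) = e A" by (auto simp: e_def fun_eq_iff)
    then have "T (e A) = (\<lambda>t. T (e A) t * T (e A) t)" using mult[OF eX[OF that] eX[OF that]] by simp
    then have "T (e A) t = T (e A) t * T (e A) t" by metis
    then show ?thesis using idem_real by blast
  qed
  define Z where "Z A = {t. T (e A) t = 0}" for A
  have Zclosed: "closed (Z A)" if "A \<in> ?KS" for A
    unfolding Z_def by (rule closed_Collect_eq[OF cont[OF eX[OF that]]]) (simp add: continuous_on_const)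
  have Zne: "Z A \<noteq> {}" if A: "A \<in> ?KS" for A
  proof
    assume "Z A = {}"
    then have "\<forall>t. T (e A) t = 1" using idem[OF A] unfolding Z_def by blast
    then have "T (e A) = T (\<lambda>x. 1)" using T1 by auto
    then have "e A = (\<lambda>x. 1)" using inj eX[OF A] one by (meson inj_onD)
    moreover obtain x where "x \<notin> A" using KS_ne[OF kless A] by blast
    ultimately show False by (metis e_def zero_neq_one)
  qed
  have Zmono: "Z C \<subseteq> Z A" if "A \<subseteq> C" "A \<in> ?KS" "C \<in> ?KS" for A C
  proof
    fix t assume "t \<in> Z C"
    have "(\<lambda>x. e A x * e C x) = e A" using that(1) by (auto simp: e_def fun_eq_iff)
    then have "T (e A) = (\<lambda>t. T (e A) t * T (e C) t)" using mult[OF eX[OF that(2)] eX[OF that(3)]] by simp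
    then have "T (e A) t = T (e A) t * T (e C) t" by metis
    with \<open>t \<in> Z C\<close> show "t \<in> Z A" by (simp add: Z_def)
  qed
  have dir: "finite F' \<Longrightarrow> F' \<subseteq> Z ` ?KS \<Longrightarrow> \<exists>C\<in>?KS. Z C \<subseteq> \<Inter>F'" for F'
  proof (induction F' rule: finite_induct)
    case empty
    then show ?case using A0 by blast
  next
    case (insert F F')
    then obtain C where C: "C \<in> ?KS" "Z C \<subseteq> \<Inter>F'" by blast
    obtain A where A: "A \<in> ?KS" "F = Z A" using insert.prems by blast
    have U: "A \<union> C \<in> ?KS" using KS_Un[OF kinf A(1) C(1)] .
    have "Z (A \<union> C) \<subseteq> Z A" "Z (A \<union> C) \<subseteq> Z C" using Zmono U A C by auto
    then show ?case using U A C by blast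
  qed
  have "UNIV \<inter> \<Inter>(Z ` ?KS) \<noteq> {}"
  proof (rule compact_imp_fip[OF Kcomp])
    show "\<And>S. S \<in> Z ` ?KS \<Longrightarrow> closed S" using Zclosed by blast
    fix F' assume "finite F'" "F' \<subseteq> Z ` ?KS"
    then obtain C where "C \<in> ?KS" "Z C \<subseteq> \<Inter>F'" using dir by blast
    then show "UNIV \<inter> \<Inter>F' \<noteq> {}" using Zne by blast
  qed
  then obtain p where p: "\<And>A. A \<in> ?KS \<Longrightarrow> T (e A) p = 0" unfolding Z_def by blast
  have fe: "T f t = T f t * T (e A) t" if "f \<in> ?X" "A \<in> ?KS" "\<forall>x. x\<notin>A \<longrightarrow> f x = 0" for f A t
  proof -
    have "(\<lambda>x. f x * e A x) = f" using that(3) by (auto simp: e_def fun_eq_iff)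
    then have "T f = (\<lambda>t. T f t * T (e A) t)" using mult[OF that(1) eX[OF that(2)]] by simp
    then show ?thesis by metis
  qed
  have X0p: "T f p = 0" if f: "f \<in> ?Yz" for f
  proof -
    obtain A where A: "A \<in> ?KS" "\<forall>x. x\<notin>A \<longrightarrow> f x = 0" using X0E[OF f] by blast
    show ?thesis using fe[OF subsetD[OF X0X f] A(1) A(2), of p] p[OF A(1)] by simp
  qed
  have shift: "(\<lambda>x. 1 * f x + (-c) * 1) \<in> ?Yz \<and> T (\<lambda>x. 1 * f x + (-c) * 1) = (\<lambda>t. T f t - c)"
    if f: "f \<in> ?X" and A: "A \<in> ?KS" "\<forall>x. x\<notin>A \<longrightarrow> f x = c" for f A c
  proof
    obtain M where M: "\<forall>x. \<bar>f x\<bar> \<le> M" using XE[OF f] bounded_range_real by blast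
    have "\<bar>f x - c\<bar> \<le> M + \<bar>c\<bar>" for x using M[rule_format, of x] by linarith
    then have "bounded (range (\<lambda>x. 1 * f x + (-c) * 1))" unfolding bounded_range_real by auto
    then show "(\<lambda>x. 1 * f x + (-c) * 1) \<in> ?Yz" using A by (intro X0I[of _ A]) auto
    show "T (\<lambda>x. 1 * f x + (-c) * 1) = (\<lambda>t. T f t - c)" using lin[OF f one, of 1 "-c"] T1 by simp
  qed
  have img: "T ` ?Yz = CKp p"
  proof
    show "T ` ?Yz \<subseteq> CKp p" using X0p cont X0X by (auto simp: CKp_def)
    show "CKp p \<subseteq> T ` ?Yz"
    proof
      fix g assume g: "g \<in> CKp p"
      then have "g \<in> CK" by (simp add: CK_def CKp_def)
      then obtain f where f: "f \<in> ?X" "T f = g" using onto by (metis imageE)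
      obtain A c where A: "A \<in> ?KS" "\<forall>x. x\<notin>A \<longrightarrow> f x = c" using XE[OF f(1)] by blast
      have "T f p - c = 0" using shift[OF f(1) A] X0p by metis
      then have "c = 0" using g f by (simp add: CKp_def)
      then have "f \<in> ?Yz" using A XE[OF f(1)] by (intro X0I[of _ A]) auto
      then show "g \<in> T ` ?Yz" using f by blast
    qed
  qed
  have Pp: "P_point p"
    unfolding P_point_def
  proof (intro allI impI)
    fix g :: "'c \<Rightarrow> real" assume "continuous_on UNIV g"
    then have "g \<in> CK" by (simp add: CK_def)
    then obtain f where f: "f \<in> ?X" "T f = g" using onto by (metis imageE)
    obtain A c where A: "A \<in> ?KS" "\<forall>x. x\<notin>A \<longrightarrow> f x = c" using XE[OF f(1)] by blast
    define h where "h = (\<lambda>x. 1 * f x + (-c) * 1)"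
    have h: "h \<in> ?Yz" "T h = (\<lambda>t. T f t - c)" using shift[OF f(1) A] by (auto simp: h_def)
    have h0: "\<forall>x. x\<notin>A \<longrightarrow> h x = 0" using A by (simp add: h_def)
    let ?U = "{t. T (e A) t < 1/2}"
    have "open ?U" by (rule open_Collect_less[OF cont[OF eX[OF A(1)]]]) (simp add: continuous_on_const)
    moreover have "p \<in> ?U" using p[OF A(1)] by simp
    moreover have "\<forall>t\<in>?U. g t = g p"
    proof
      fix t assume "t \<in> ?U"
      then have "T (e A) t = 0" using idem[OF A(1), of t] by auto
      then have "T h t = 0" using fe[OF subsetD[OF X0X h(1)] A(1) h0, of t] by simp
      moreover have "T h p = 0" using X0p[OF h(1)] .
      ultimately show "g t = g p" using h(2) f(2) by (metis diff_eq_eq)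
    qed
    ultimately show "\<exists>U. open U \<and> p \<in> U \<and> (\<forall>x\<in>U. g x = g p)" by blast
  qed
  show ?thesis
  proof (intro exI conjI)
    show "T ` ?Yz = CKp p" by (rule img)
    show "T ` ?Yz = CKp p" by (rule img)
    show "inj_on T ?Yz" using inj X0X inj_on_subset by blast
    show "\<forall>f\<in>?Yz. \<forall>g\<in>?Yz. \<forall>a b. T (\<lambda>x. a * f x + b * g x) = (\<lambda>t. a * T f t + b * T g t)"
      using lin X0X by blast
    show "\<forall>f\<in>?Yz. \<forall>g\<in>?Yz. supnorm (\<lambda>t. T f t - T g t) = supnorm (\<lambda>x. f x - g x)"
      using isom X0X by blast
    show "P_point p" by (rule Pp)
  qed
qed

end
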